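(* Let $q\equiv 3\pmod 4$ be a prime power, let $U$ be a cyclic subgroup of $\mathrm{PSL}(2,q)$ of order $\frac{q+1}{2}$, and let $V$ be its normalizer in $\mathrm{PSL}(2,q)$, which is a dihedral group of order $q+1$ containing $U$. Then $V$ is a $U$-intersecting subset of $\mathrm{PSL}(2,q)$; in particular $\rho(\mathrm{PSL}(2,q),U)\ge 2$.
   Context: For a finite group $G$ and $H\le G$, a subset $\mathcal F\subseteq G$ is $H$-intersecting if for all $g,g'\in\mathcal F$ there is $x\in G$ with $x^{-1}g'^{-1}gx\in H$; $\rho(G,H)=\max\{|\mathcal F|/|H|\}$ over $H$-intersecting $\mathcal F$. *)

theory Defs
  imports "HOL-Algebra.Algebra"
begin

text \<open>2x2 matrices over a field, as quadruples (a,b,c,d) = [[a,b],[c,d]].\<close>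
type_synonym 'a mat22 = "'a \<times> 'a \<times> 'a \<times> 'a"

definition mmul :: "'a::comm_ring_1 mat22 \<Rightarrow> 'a mat22 \<Rightarrow> 'a mat22" where
  "mmul = (\<lambda>(x1,x2,x3,x4) (y1,y2,y3,y4).
      (x1*y1 + x2*y3, x1*y2 + x2*y4, x3*y1 + x4*y3, x3*y2 + x4*y4))"

definition mdet :: "'a::comm_ring_1 mat22 \<Rightarrow> 'a" where
  "mdet = (\<lambda>(x1,x2,x3,x4). x1*x4 - x2*x3)"

definition SL2 :: "('a::field mat22) monoid" where
  "SL2 = \<lparr>carrier = {M. mdet M = 1}, monoid.mult = mmul, one = (1,0,0,1)\<rparr>"

definition centre_SL2 :: "'a::field mat22 set" where
  "centre_SL2 = {(1,0,0,1), (-1,0,0,-1)}"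

definition PSL2 :: "('a::field mat22 set) monoid" where
  "PSL2 = SL2 Mod centre_SL2"

definition intersecting :: "('g,'b) monoid_scheme \<Rightarrow> 'g set \<Rightarrow> 'g set \<Rightarrow> bool" where
  "intersecting G H F \<longleftrightarrow> F \<subseteq> carrier G \<and>
     (\<forall>g\<in>F. \<forall>g'\<in>F. \<exists>x\<in>carrier G.
        inv\<^bsub>G\<^esub> x \<otimes>\<^bsub>G\<^esub> (inv\<^bsub>G\<^esub> g' \<otimes>\<^bsub>G\<^esub> g) \<otimes>\<^bsub>G\<^esub> x \<in> H)"

definition rho :: "('g,'b) monoid_scheme \<Rightarrow> 'g set \<Rightarrow> real" where
  "rho G H = Max {real (card F) / real (card H) | F. intersecting G H F}"

end

theory Submission
  imports Defs
begin


lemma card_zero_field: "of_nat (card (UNIV::'a set)) = (0::'a::{field,finite})"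
proof -
  have "(\<Sum>x\<in>(UNIV::'a set). x + 1) = (\<Sum>x\<in>UNIV. x)"
    by (rule sum.reindex_bij_witness[of _ "\<lambda>x. x - 1" "\<lambda>x. x + 1"]) auto
  moreover have "(\<Sum>x\<in>(UNIV::'a set). x + 1) = (\<Sum>x\<in>UNIV. x) + of_nat (card (UNIV::'a set))"
    by (simp add: sum.distrib)
  ultimately show ?thesis by simp
qed

lemma two_ne_zero_field:
  assumes "card (UNIV::'a::{field,finite} set) mod 4 = 3"
  shows "(2::'a) \<noteq> 0"
proof
  assume h: "(2::'a) = 0"
  define k where "k = card (UNIV::'a set) div 2"
  have k: "card (UNIV::'a set) = 2*k + 1" using assms unfolding k_def by presburger
  have "(of_nat (card (UNIV::'a set))::'a) = 2 * of_nat k + 1" by (simp add: k)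
  also have "\<dots> = 1" using h by simp
  finally show False using card_zero_field[where 'a='a] by simp
qed

lemma fermat_field:
  fixes a :: "'a::{field,finite}"
  assumes "a \<noteq> 0"
  shows "a ^ (card (UNIV::'a set) - 1) = 1"
proof -
  let ?S = "UNIV - {0::'a}"
  have cS: "card ?S = card (UNIV::'a set) - 1" by (simp add: card_Diff_singleton)
  have "(\<Prod>x\<in>?S. a * x) = (\<Prod>x\<in>?S. x)"
    by (rule prod.reindex_bij_witness[of _ "\<lambda>x. x / a" "\<lambda>x. a * x"]) (use assms in auto)
  moreover have "(\<Prod>x\<in>?S. a * x) = a ^ card ?S * (\<Prod>x\<in>?S. x)"
    by (simp add: prod.distrib)
  moreover have "(\<Prod>x\<in>?S. x) \<noteq> 0" by simp
  ultimately show ?thesis using cS by simp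
qed

lemma neg_one_nonsquare:
  fixes x :: "'a::{field,finite}"
  assumes "card (UNIV::'a set) mod 4 = 3"
  shows "x^2 \<noteq> -1"
proof
  assume h: "x^2 = -1"
  have x0: "x \<noteq> 0" using h by auto
  have two: "(2::'a) \<noteq> 0" using two_ne_zero_field assms by blast
  define k where "k = card (UNIV::'a set) div 4"
  have k: "card (UNIV::'a set) - 1 = 4*k + 2" using assms unfolding k_def by presburger
  have e1: "(x^2)^(2*k) * x^2 = x^(2*(2*k)) * x^2" by (simp only: power_mult)
  have e2: "x^(2*(2*k)) * x^2 = x^(2*(2*k)+2)" by (simp only: power_add)
  have e3: "2*(2*k)+2 = 4*k+(2::nat)" by simp
  have e: "x^(4*k+2) = (x^2)^(2*k) * x^2" using e1 e2 e3 by metis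
  have "x ^ (card (UNIV::'a set) - 1) = (x^2)^(2*k) * x^2"
    unfolding k by (rule e)
  also have "\<dots> = -1" using h by (simp add: power_mult)
  finally have "(-1::'a) = 1" using fermat_field[OF x0] by simp
  hence "(2::'a) = 0" by (metis add.inverse_inverse one_add_one neg_eq_iff_add_eq_0)
  with two show False by simp
qed

lemma sum_two_squares:
  fixes e :: "'a::{field,finite}"
  assumes odd: "odd (card (UNIV::'a set))"
  shows "\<exists>s t. s^2 + t^2 = e"
proof -
  define Sq where "Sq = (\<lambda>y::'a. y^2) ` UNIV"
  define r where "r = (\<lambda>y::'a. SOME x. x^2 = y)"
  have r: "r (x^2) ^2 = x^2" for x unfolding r_def by (rule someI[of "\<lambda>z. z^2 = x^2" x]) (rule refl)
  have rr: "r (x^2) = x \<or> r (x^2) = -x" for x using r[of x] power2_eq_iff by blast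
  have "UNIV \<subseteq> r ` Sq \<union> (\<lambda>y. - r y) ` Sq"
  proof
    fix x :: 'a
    have xs: "x^2 \<in> Sq" unfolding Sq_def by simp
    show "x \<in> r ` Sq \<union> (\<lambda>y. - r y) ` Sq"
    proof (cases "r (x^2) = x")
      case True
      then show ?thesis using xs by (metis UnI1 image_eqI)
    next
      case False
      then have "x = - r (x^2)" using rr[of x] by simp
      then show ?thesis using xs by (metis UnI2 image_eqI)
    qed
  qed
  hence "card (UNIV::'a set) \<le> card (r ` Sq \<union> (\<lambda>y. - r y) ` Sq)" by (intro card_mono) auto
  also have "\<dots> \<le> card (r ` Sq) + card ((\<lambda>y. - r y) ` Sq)" by (rule card_Un_le)
  also have "\<dots> \<le> card Sq + card Sq" by (intro add_mono card_image_le) auto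
  finally have c1: "card (UNIV::'a set) \<le> 2 * card Sq" by simp
  define T where "T = (\<lambda>y. e - y) ` Sq"
  have cT: "card T = card Sq" unfolding T_def by (rule card_image) (auto simp: inj_on_def)
  have "Sq \<inter> T \<noteq> {}"
  proof
    assume "Sq \<inter> T = {}"
    hence "card (Sq \<union> T) = card Sq + card T" by (simp add: card_Un_disjoint)
    moreover have "card (Sq \<union> T) \<le> card (UNIV::'a set)" by (intro card_mono) auto
    moreover have "card (UNIV::'a set) \<noteq> 2 * card Sq" using odd by auto
    ultimately show False using c1 cT by linarith
  qed
  then obtain y where "y \<in> Sq" "y \<in> T" by blast
  then obtain s t where "y = s^2" "y = e - t^2" unfolding Sq_def T_def by blast
  hence "s^2 + t^2 = e" by (simp add: algebra_simps)
  thus ?thesis by blast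
qed



definition mneg :: "'a::comm_ring_1 mat22 \<Rightarrow> 'a mat22" where
  "mneg = (\<lambda>(x1,x2,x3,x4). (-x1,-x2,-x3,-x4))"

definition madj :: "'a::comm_ring_1 mat22 \<Rightarrow> 'a mat22" where
  "madj = (\<lambda>(x1,x2,x3,x4). (x4,-x2,-x3,x1))"

lemma mmul_simp [simp]: "mmul (x1,x2,x3,x4) (y1,y2,y3,y4) =
      (x1*y1 + x2*y3, x1*y2 + x2*y4, x3*y1 + x4*y3, x3*y2 + x4*y4)"
  by (simp add: mmul_def)
lemma mdet_simp [simp]: "mdet (x1,x2,x3,x4) = x1*x4 - x2*x3" by (simp add: mdet_def)
lemma mneg_simp [simp]: "mneg (x1,x2,x3,x4) = (-x1,-x2,-x3,-x4)" by (simp add: mneg_def)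
lemma madj_simp [simp]: "madj (x1,x2,x3,x4) = (x4,-x2,-x3,x1)" by (simp add: madj_def)

lemma mmul_assoc: "mmul (mmul A B) C = mmul A (mmul B (C::'a::comm_ring_1 mat22))"
  by (cases A rule: prod_cases4, cases B rule: prod_cases4, cases C rule: prod_cases4)
     (simp add: algebra_simps)
lemma mmul_one_left [simp]: "mmul (1,0,0,1) A = (A::'a::comm_ring_1 mat22)"
  by (cases A rule: prod_cases4) simp
lemma mmul_one_right [simp]: "mmul A (1,0,0,1) = (A::'a::comm_ring_1 mat22)"
  by (cases A rule: prod_cases4) simp
lemma mdet_mmul: "mdet (mmul A B) = mdet A * mdet (B::'a::comm_ring_1 mat22)"
  by (cases A rule: prod_cases4, cases B rule: prod_cases4) (simp add: algebra_simps)
lemma mneg_mmul_left: "mmul (mneg A) B = mneg (mmul A (B::'a::comm_ring_1 mat22))"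
  by (cases A rule: prod_cases4, cases B rule: prod_cases4) (simp add: algebra_simps)
lemma mneg_mmul_right: "mmul A (mneg B) = mneg (mmul A (B::'a::comm_ring_1 mat22))"
  by (cases A rule: prod_cases4, cases B rule: prod_cases4) (simp add: algebra_simps)
lemma mneg_mneg [simp]: "mneg (mneg A) = (A::'a::comm_ring_1 mat22)"
  by (cases A rule: prod_cases4) simp
lemma mdet_mneg [simp]: "mdet (mneg A) = mdet (A::'a::comm_ring_1 mat22)"
  by (cases A rule: prod_cases4) (simp add: algebra_simps)
lemma madj_left: "mdet A = 1 \<Longrightarrow> mmul (madj A) A = ((1,0,0,1)::'a::comm_ring_1 mat22)"
  by (cases A rule: prod_cases4) (simp add: algebra_simps)
lemma madj_right: "mdet A = 1 \<Longrightarrow> mmul A (madj A) = ((1,0,0,1)::'a::comm_ring_1 mat22)"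
  by (cases A rule: prod_cases4) (simp add: algebra_simps)
lemma mdet_madj [simp]: "mdet (madj A) = mdet (A::'a::comm_ring_1 mat22)"
  by (cases A rule: prod_cases4) (simp add: algebra_simps)

lemma SL2_carrier [simp]: "carrier SL2 = {M. mdet M = 1}" by (simp add: SL2_def)
lemma SL2_mult [simp]: "monoid.mult SL2 = mmul" by (simp add: SL2_def)
lemma SL2_one [simp]: "one SL2 = (1,0,0,1)" by (simp add: SL2_def)

lemma SL2_group: "group (SL2::'a::field mat22 monoid)"
proof (rule groupI)
  fix x :: "'a mat22" assume "x \<in> carrier SL2"
  then show "\<exists>y\<in>carrier SL2. y \<otimes>\<^bsub>SL2\<^esub> x = \<one>\<^bsub>SL2\<^esub>"
    by (intro bexI[where x="madj x"]) (auto simp: madj_left)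
qed (auto simp: mdet_mmul mmul_assoc)

lemma SL2_inv: "mdet A = 1 \<Longrightarrow> inv\<^bsub>SL2\<^esub> A = madj (A::'a::field mat22)"
  using group.inv_equality[OF SL2_group, of "madj A" A] by (simp add: madj_left)

lemma centre_normal: "centre_SL2 \<lhd> (SL2::'a::field mat22 monoid)"
proof -
  have sub: "subgroup centre_SL2 (SL2::'a mat22 monoid)"
    by (rule group.subgroupI[OF SL2_group]) (auto simp: centre_SL2_def SL2_inv)
  show ?thesis
    unfolding group.normal_inv_iff[OF SL2_group]
    using sub by (auto simp: centre_SL2_def SL2_inv algebra_simps madj_right
        mneg_mmul_left[of "(1,0,0,1)", simplified] )
qed

definition pr :: "'a::field mat22 \<Rightarrow> 'a mat22 set" where
  "pr A = centre_SL2 #>\<^bsub>SL2\<^esub> A"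

lemma pr_eq: "pr A = {A, mneg (A::'a::field mat22)}"
proof -
  have "mmul (-1,0,0,-1) A = mneg A" by (cases A rule: prod_cases4) simp
  then show ?thesis by (auto simp: pr_def r_coset_def centre_SL2_def)
qed

lemma pr_mneg [simp]: "pr (mneg A) = pr A" by (auto simp: pr_eq)

lemma pr_eq_iff: "pr A = pr B \<longleftrightarrow> B = A \<or> B = mneg (A::'a::field mat22)"
  by (auto simp: pr_eq doubleton_eq_iff)

lemma PSL2_group: "group (PSL2::'a::field mat22 set monoid)"
  unfolding PSL2_def by (rule normal.factorgroup_is_group[OF centre_normal])

lemma pr_hom: "pr \<in> hom SL2 (PSL2::'a::field mat22 set monoid)"
  unfolding PSL2_def pr_def[abs_def] by (rule normal.r_coset_hom_Mod[OF centre_normal])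

lemma PSL2_carrier: "carrier (PSL2::'a::field mat22 set monoid) = pr ` {M. mdet M = 1}"
  by (simp add: PSL2_def carrier_FactGroup pr_def[abs_def])

lemma pr_in_carrier: "mdet A = 1 \<Longrightarrow> pr (A::'a::field mat22) \<in> carrier PSL2"
  by (simp add: PSL2_carrier)

lemma PSL2_one: "one (PSL2::'a::field mat22 set monoid) = pr (1,0,0,1)"
  by (simp add: PSL2_def pr_eq centre_SL2_def)

lemma pr_mult: "mdet A = 1 \<Longrightarrow> mdet B = 1 \<Longrightarrow>
   pr A \<otimes>\<^bsub>PSL2\<^esub> pr B = pr (mmul A (B::'a::field mat22))"
  using hom_mult[OF pr_hom, of A B] by simp

lemma pr_inv: "mdet A = 1 \<Longrightarrow> inv\<^bsub>PSL2\<^esub> (pr A) = pr (madj (A::'a::field mat22))"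
proof -
  assume d: "mdet A = 1"
  have gh: "group_hom (SL2::'a mat22 monoid) PSL2 pr"
    by (simp add: group_hom_def group_hom_axioms_def SL2_group PSL2_group pr_hom)
  show ?thesis using group_hom.hom_inv[OF gh, of A] SL2_inv[OF d] d by simp
qed

lemma pr_pow: "mdet A = 1 \<Longrightarrow> pr (A [^]\<^bsub>SL2\<^esub> (k::nat)) = pr (A::'a::field mat22) [^]\<^bsub>PSL2\<^esub> k"
  using hom_nat_pow[OF pr_hom _ SL2_group PSL2_group, of A k] by simp



lemma inv_shape:
  fixes za zb zc zd :: "'za::field"
  assumes two: "(2::'za) \<noteq> 0" and ns: "\<forall>x::'za. x^2 \<noteq> -1"
    and hdet: "za*zd - zb*zc = 1"
    and n1: "(za,zb,zc,zd) \<noteq> (1,0,0,1)" and n2: "(za,zb,zc,zd) \<noteq> (-1,0,0,-1)"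
    and sq: "mmul (za,zb,zc,zd) (za,zb,zc,zd) = (1,0,0,1) \<or> mmul (za,zb,zc,zd) (za,zb,zc,zd) = (-1,0,0,-1)"
  shows "zd = -za \<and> za*za + zb*zc = -1"
proof (cases "za + zd = 0")
  case False
  from sq have e: "zb*(za+zd) = 0" "zc*(za+zd) = 0" by (auto simp: algebra_simps)
  hence bc: "zb = 0" "zc = 0" using False by auto
  from sq bc have "(za*za = 1 \<and> zd*zd = 1) \<or> (za*za = -1)" by auto
  then show ?thesis
  proof
    assume h: "za*za = 1 \<and> zd*zd = 1"
    have "za*zd = 1" using hdet bc by simp
    hence "za*(za - zd) = 0" using h by (simp add: algebra_simps)
    moreover have "za \<noteq> 0" using h by auto
    ultimately have "zd = za" by simp
    moreover from h have "za = 1 \<or> za = -1"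
      by (metis mult_1 power2_eq_1_iff power2_eq_square)
    ultimately show ?thesis using n1 n2 bc by auto
  next
    assume "za*za = -1" with ns show ?thesis by (simp add: power2_eq_square)
  qed
next
  case True
  hence zd: "zd = -za" by (simp add: add_eq_0_iff2)
  with hdet have e0: "za*(-za) - zb*zc = 1" by simp
  have "za*za + zb*zc = -(za*(-za) - zb*zc)" by (simp add: algebra_simps)
  with e0 have e: "za*za + zb*zc = -1" by simp
  show ?thesis using zd e by simp
qed

definition tm :: "'za::field \<Rightarrow> 'za \<Rightarrow> 'za \<Rightarrow> 'za \<times> 'za \<Rightarrow> 'za mat22" where
  "tm za zb zc p = (fst p + snd p * za, snd p * zb, snd p * zc, fst p - snd p * za)"

lemma tm_det: "za*za + zb*zc = -1 \<Longrightarrow> mdet (tm za zb zc (x,y)) = x^2 + y^2"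
proof -
  assume e: "za*za + zb*zc = -1"
  have "mdet (tm za zb zc (x,y)) = x*x - y*y*(za*za + zb*zc)"
    unfolding tm_def by (simp add: algebra_simps)
  also have "\<dots> = x^2 + y^2" using e by (simp add: power2_eq_square)
  finally show ?thesis .
qed

lemma tm_comm: "mmul (tm za zb zc p) (za,zb,zc,-za) = mmul (za,zb,zc,-za) (tm za zb zc p)"
  by (cases p) (simp add: tm_def algebra_simps)

lemma tm_neg: "tm za zb zc (-x,-y) = mneg (tm za zb zc (x,y))"
  by (simp add: tm_def algebra_simps)

lemma comm_tm:
  fixes za zb zc x y u w :: "'za::field"
  assumes e: "za*za + zb*zc = -1" and zc: "zc \<noteq> 0"
    and cm: "mmul (x,y,u,w) (za,zb,zc,-za) = mmul (za,zb,zc,-za) (x,y,u,w)"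
  shows "(x,y,u,w) = tm za zb zc (x - u/zc*za, u/zc)"
proof -
  from cm have e1': "x*za + y*zc = za*x + zb*u" and e2: "u*za + w*zc = zc*x + (-za)*u"
    by (simp_all only: mmul_simp prod.inject)
  from e1' have e1: "y*zc = zb*u" by (simp add: algebra_simps)
  have "y = u/zc*zb" using e1 zc by (simp add: field_simps)
  moreover have "w = x - u/zc*za - u/zc*za"
  proof -
    have h: "w*zc = x*zc - 2*u*za" using e2 by (simp add: algebra_simps)
    have "(x - u/zc*za - u/zc*za)*zc = x*zc - 2*u*za" using zc by (simp add: algebra_simps)
    with h have "w*zc = (x - u/zc*za - u/zc*za)*zc" by simp
    thus ?thesis using zc by simp
  qed
  ultimately show ?thesis using zc by (simp add: tm_def)
qed

lemma anticomm_trace: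
  fixes za zb zc x y u w :: "'za::field"
  assumes zb: "zb \<noteq> 0" and two: "(2::'za) \<noteq> 0"
    and cm: "mmul (x,y,u,w) (za,zb,zc,-za) = mneg (mmul (za,zb,zc,-za) (x,y,u,w))"
  shows "w = -x"
proof -
  from cm have "x*zb + y*(-za) = - (za*y + zb*w)" by (simp only: mmul_simp mneg_simp prod.inject)
  hence "zb*(x + w) = 0" by (simp add: algebra_simps)
  thus ?thesis using zb by (simp add: add_eq_0_iff2)
qed

lemma conj_exists:
  fixes za zb zc ya yb yc s t :: "'za::field"
  assumes e: "za*za + zb*zc = -1" and e2: "ya*ya + yb*yc = -1"
    and st: "zc*yc*(s*s + t*t) = 1"
  shows "mdet (zc*s + zc*ya*t, ya*s - t - za*s - za*ya*t, zc*yc*t, yc*s - yc*za*t) = 1 \<and>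
    mmul (zc*s + zc*ya*t, ya*s - t - za*s - za*ya*t, zc*yc*t, yc*s - yc*za*t) (za,zb,zc,-za)
     = mmul (ya,yb,yc,-ya) (zc*s + zc*ya*t, ya*s - t - za*s - za*ya*t, zc*yc*t, yc*s - yc*za*t)"
proof -
  have "mdet (zc*s + zc*ya*t, ya*s - t - za*s - za*ya*t, zc*yc*t, yc*s - yc*za*t) = zc*yc*(s*s + t*t)"
    by (simp add: algebra_simps)
  hence d: "mdet (zc*s + zc*ya*t, ya*s - t - za*s - za*ya*t, zc*yc*t, yc*s - yc*za*t) = 1"
    using st by simp
  have l1: "(zc*s + zc*ya*t)*za + (ya*s - t - za*s - za*ya*t)*zc = ya*zc*s - zc*t"
    by (simp add: algebra_simps)
  have r1: "ya*(zc*s + zc*ya*t) + yb*(zc*yc*t) = ya*zc*s + zc*t*(ya*ya + yb*yc)"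
    by (simp add: algebra_simps)
  have c1: "(zc*s + zc*ya*t)*za + (ya*s - t - za*s - za*ya*t)*zc = ya*(zc*s + zc*ya*t) + yb*(zc*yc*t)"
    using l1 r1 e2 by simp
  have l2: "(zc*s + zc*ya*t)*zb - (ya*s - t - za*s - za*ya*t)*za
     = s*(za*za+zb*zc) + ya*t*(za*za+zb*zc) + za*t - za*ya*s"
    by (simp add: algebra_simps)
  have r2: "ya*(ya*s - t - za*s - za*ya*t) + yb*(yc*s - yc*za*t)
     = s*(ya*ya+yb*yc) - ya*t - za*ya*s - za*t*(ya*ya+yb*yc)"
    by (simp add: algebra_simps)
  have c2: "(zc*s + zc*ya*t)*zb - (ya*s - t - za*s - za*ya*t)*za = ya*(ya*s - t - za*s - za*ya*t) + yb*(yc*s - yc*za*t)"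
    using l2 r2 e e2 by simp
  have c3: "(zc*yc*t)*za + (yc*s - yc*za*t)*zc = yc*(zc*s + zc*ya*t) - ya*(zc*yc*t)"
    by (simp add: algebra_simps)
  have l4: "(zc*yc*t)*zb - (yc*s - yc*za*t)*za = yc*t*(za*za+zb*zc) - za*yc*s"
    by (simp add: algebra_simps)
  have r4: "yc*(ya*s - t - za*s - za*ya*t) - ya*(yc*s - yc*za*t) = - yc*t - za*yc*s"
    by (simp add: algebra_simps)
  have c4: "(zc*yc*t)*zb - (yc*s - yc*za*t)*za = yc*(ya*s - t - za*s - za*ya*t) - ya*(yc*s - yc*za*t)"
    using l4 r4 e by simp
  show ?thesis using d c1 c2 c3 c4 by (simp add: algebra_simps)
qed

lemma W_exists:
  fixes za zb zc s t :: "'za::field"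
  assumes e: "za*za + zb*zc = -1"
    and st: "zc*zc*(s*s + t*t) = -1"
  shows "mdet (zc*s + zc*za*t, t - 2*za*s - za*za*t, zc*zc*t, -(zc*za*t) - zc*s) = 1 \<and>
    mmul (zc*s + zc*za*t, t - 2*za*s - za*za*t, zc*zc*t, -(zc*za*t) - zc*s) (za,zb,zc,-za) =
      mneg (mmul (za,zb,zc,-za) (zc*s + zc*za*t, t - 2*za*s - za*za*t, zc*zc*t, -(zc*za*t) - zc*s))"
proof -
  have "mdet (zc*s + zc*za*t, t - 2*za*s - za*za*t, zc*zc*t, -(zc*za*t) - zc*s) = -(zc*zc*(s*s + t*t))"
    by (simp add: algebra_simps)
  hence d: "mdet (zc*s + zc*za*t, t - 2*za*s - za*za*t, zc*zc*t, -(zc*za*t) - zc*s) = 1"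
    using st by simp
  have l1: "(zc*s + zc*za*t)*za + (t - 2*za*s - za*za*t)*zc = zc*t - za*zc*s"
    by (simp add: algebra_simps)
  have r1: "-(za*(zc*s + zc*za*t) + zb*(zc*zc*t)) = -(za*zc*s) - zc*t*(za*za+zb*zc)"
    by (simp add: algebra_simps)
  have c1: "(zc*s + zc*za*t)*za + (t - 2*za*s - za*za*t)*zc = -(za*(zc*s + zc*za*t) + zb*(zc*zc*t))"
    using l1 r1 e by simp
  have c2: "(zc*s + zc*za*t)*zb - (t - 2*za*s - za*za*t)*za = -(za*(t - 2*za*s - za*za*t) + zb*(-(zc*za*t) - zc*s))"
    by (simp add: algebra_simps)
  have c3: "(zc*zc*t)*za + (-(zc*za*t) - zc*s)*zc = -(zc*(zc*s + zc*za*t) - za*(zc*zc*t))"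
    by (simp add: algebra_simps)
  have l4: "(zc*zc*t)*zb - (-(zc*za*t) - zc*s)*za = zc*t*(za*za+zb*zc) + za*zc*s"
    by (simp add: algebra_simps)
  have r4: "-(zc*(t - 2*za*s - za*za*t) - za*(-(zc*za*t) - zc*s)) = - (zc*t) + za*zc*s"
    by (simp add: algebra_simps)
  have c4: "(zc*zc*t)*zb - (-(zc*za*t) - zc*s)*za = -(zc*(t - 2*za*s - za*za*t) - za*(-(zc*za*t) - zc*s))"
    using l4 r4 e by simp
  show ?thesis using d c1 c2 c3 c4 by simp
qed

lemma trace0_sq:
  "mdet (x,y,u,-x) = 1 \<Longrightarrow> mmul (x,y,u,-x) (x,y,u,-x) = ((-1,0,0,-1)::'za::field mat22)"
proof -
  assume h: "mdet (x,y,u,-x) = 1"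
  have "x*x + y*u = -(x*(-x) - y*u)" by (simp add: algebra_simps)
  with h have e: "x*x + y*u = -1" by simp
  have "u*y + (-x)*(-x) = x*x + y*u" by (simp add: algebra_simps)
  with e have e2: "u*y + (-x)*(-x) = -1" by simp
  have "x*y + y*(-x) = 0" "u*x + (-x)*u = 0" by (simp_all add: algebra_simps)
  with e e2 show ?thesis by simp
qed

lemma circle_card:
  assumes ns: "\<forall>x::'za::{field,finite}. x^2 \<noteq> -1"
  shows "card {p::'za\<times>'za. fst p^2 + snd p^2 = 1} \<le> card (UNIV::'za set) + 1"
proof -
  define C where "C = {p::'za\<times>'za. fst p^2 + snd p^2 = 1}"
  define f where "f = (\<lambda>p::'za\<times>'za. snd p / (fst p - 1))"
  define g where "g = (\<lambda>m::'za. ((m*m - 1)/(m*m+1), m*((m*m-1)/(m*m+1) - 1)))"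
  have gf: "g (f p) = p" if p: "p \<in> C - {(1,0)}" for p
  proof -
    obtain al be where pe: "p = (al, be)" by (cases p)
    have c: "al*al + be*be = 1" using p pe by (simp add: C_def power2_eq_square)
    have a1: "al \<noteq> 1"
    proof
      assume "al = 1"
      with c have "be*be = 0" by simp
      hence "be = 0" by simp
      with \<open>al = 1\<close> p pe show False by simp
    qed
    define m where "m = be / (al - 1)"
    have bm: "be = m*(al - 1)" using a1 by (simp add: m_def)
    have "(al - 1)*((al+1) + m*m*(al-1)) = al*al + (m*(al-1))*(m*(al-1)) - 1"
      by (simp add: algebra_simps)
    also have "\<dots> = 0" using c bm by simp
    finally have "(al+1) + m*m*(al-1) = 0" using a1 by simp
    hence h: "al*(m*m+1) = m*m - 1" by (simp add: algebra_simps)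
    have nz: "m*m + 1 \<noteq> 0"
    proof
      assume "m*m + 1 = 0"
      hence "m^2 = -1" by (simp add: power2_eq_square add_eq_0_iff2)
      with ns show False by blast
    qed
    have al: "al = (m*m - 1)/(m*m+1)" using h nz by (simp add: field_simps)
    have "f p = m" by (simp add: f_def pe m_def)
    thus ?thesis by (simp add: g_def pe al[symmetric] bm)
  qed
  have inj: "inj_on f (C - {(1,0)})" by (rule inj_on_inverseI[where g=g]) (rule gf)
  have "card (C - {(1,0)}) = card (f ` (C - {(1,0)}))" using inj by (simp add: card_image)
  also have "\<dots> \<le> card (UNIV::'za set)" by (rule card_mono) auto
  finally have "card (C - {(1,0)}) \<le> card (UNIV::'za set)" .
  moreover have "card C \<le> card (C - {(1,0)}) + 1"
    by (metis card_Diff1_le card_Diff_singleton_if finite_class.finite_UNIV finite_subset le_add1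
        subset_UNIV add.commute le_SucE le_Suc_eq Suc_eq_plus1 order_refl card_Suc_Diff1)
  ultimately show ?thesis unfolding C_def by simp
qed



lemma normV:
  fixes G (structure)
  assumes "U \<subseteq> carrier G"
  shows "h \<in> normalizer G U \<longleftrightarrow> h \<in> carrier G \<and> h <# U #> inv h = U"
  unfolding normalizer_def stabilizer_def using assms by auto

lemma anticomm_conj:
  fixes W Z M :: "'a::comm_ring_1 mat22"
  assumes a: "mmul W Z = mneg (mmul Z W)" and c: "mmul M Z = mmul Z M"
  shows "mmul (mmul (mmul W M) W) Z = mmul Z (mmul (mmul W M) W)"
proof -
  have "mmul (mmul (mmul W M) W) Z = mmul (mmul W M) (mmul W Z)" by (simp only: mmul_assoc)
  also have "\<dots> = mneg (mmul (mmul W M) (mmul Z W))" by (simp only: a mneg_mmul_right)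
  also have "mmul (mmul W M) (mmul Z W) = mmul W (mmul (mmul M Z) W)" by (simp only: mmul_assoc)
  also have "\<dots> = mmul W (mmul (mmul Z M) W)" by (simp only: c)
  also have "\<dots> = mmul (mmul W Z) (mmul M W)" by (simp only: mmul_assoc)
  also have "\<dots> = mneg (mmul (mmul Z W) (mmul M W))" by (simp only: a mneg_mmul_left)
  also have "mneg (mneg (mmul (mmul Z W) (mmul M W))) = mmul Z (mmul (mmul W M) W)"
    by (simp only: mneg_mneg mmul_assoc)
  finally show ?thesis .
qed

lemma neg_self_zero:
  fixes x :: "'a::field"
  assumes two: "(2::'a) \<noteq> 0" and h: "-x = x"
  shows "x = 0"
proof -
  have "2*x = x - (-x)" by (simp add: algebra_simps mult_2)
  also have "\<dots> = 0" by (simp only: h diff_self)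
  finally show ?thesis using two by simp
qed

lemma mneg_self:
  fixes M :: "'a::field mat22"
  assumes two: "(2::'a) \<noteq> 0" and h: "mneg M = M"
  shows "mdet M = 0"
proof -
  obtain x1 x2 x3 x4 where M: "M = (x1,x2,x3,x4)" by (cases M rule: prod_cases4)
  from h have "-x1 = x1" "-x2 = x2" "-x3 = x3" "-x4 = x4" unfolding M by (simp_all only: mneg_simp prod.inject)
  hence "x1 = 0" "x2 = 0" "x3 = 0" "x4 = 0" using neg_self_zero[OF two] by blast+
  thus ?thesis using M by simp
qed

lemma (in group) inv_cancel_l2: "x \<in> carrier G \<Longrightarrow> y \<in> carrier G \<Longrightarrow> inv x \<otimes> (x \<otimes> y) = y"
  by (simp add: m_assoc[symmetric])
lemma (in group) inv_cancel_r2: "x \<in> carrier G \<Longrightarrow> y \<in> carrier G \<Longrightarrow> x \<otimes> (inv x \<otimes> y) = y"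
  by (simp add: m_assoc[symmetric])



theorem proposition6p2:
  fixes U V :: "('a::{field,finite}) mat22 set set"
  assumes "card (UNIV :: 'a set) mod 4 = 3"
    and "subgroup U (PSL2 :: 'a mat22 set monoid)"
    and "\<exists>g\<in>carrier (PSL2 :: 'a mat22 set monoid). U = generate PSL2 {g}"
    and "card U = (card (UNIV :: 'a set) + 1) div 2"
    and "V = normalizer (PSL2 :: 'a mat22 set monoid) U"
  shows "intersecting (PSL2 :: 'a mat22 set monoid) U V \<and> rho (PSL2 :: 'a mat22 set monoid) U \<ge> 2"
proof -
  note q4 = assms(1) and subU = assms(2) and cardU = assms(4) and Vdef = assms(5)
  let ?G = "PSL2 :: 'a mat22 set monoid"
  interpret G: group ?G by (rule PSL2_group)
  interpret S: group "SL2 :: 'a mat22 monoid" by (rule SL2_group)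
  have two: "(2::'a) \<noteq> 0" using two_ne_zero_field q4 by blast
  have ns: "\<forall>x::'a. x^2 \<noteq> -1" using neg_one_nonsquare q4 by blast
  have oddq: "odd (card (UNIV::'a set))" using q4 by presburger
  define n where "n = card U"
  define m where "m = n div 2"
  have nm: "n = 2*m" "m > 0" using q4 cardU unfolding n_def m_def by presburger+
  have finG: "finite (carrier ?G)" by (rule finite_subset[OF subset_UNIV]) simp
  have Usub: "U \<subseteq> carrier ?G" using subU subgroup.subset by blast
  have finU: "finite U" using finite_subset[OF Usub finG] .
  obtain g where g: "g \<in> carrier ?G" and Ug: "U = generate ?G {g}" using assms(3) by blast
  have ordg: "G.ord g = n" unfolding n_def Ug by (rule G.generate_pow_card[OF g])
  have Upow: "U = {g [^]\<^bsub>?G\<^esub> k | k. k \<in> (UNIV::nat set)}"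
    unfolding Ug by (rule G.generate_pow_on_finite_carrier[OF finG g])
  obtain A where A: "mdet A = 1" and gA: "g = pr A" using g by (auto simp: PSL2_carrier)
  define Z where "Z = A [^]\<^bsub>SL2\<^esub> m"
  define z where "z = g [^]\<^bsub>?G\<^esub> m"
  have Zc: "mdet Z = 1" unfolding Z_def using S.nat_pow_closed[of A m] A by simp
  have zZ: "z = pr Z" unfolding z_def Z_def gA using pr_pow[OF A] by simp
  have zU: "z \<in> U" unfolding Upow z_def by blast
  have gn: "g [^]\<^bsub>?G\<^esub> n = \<one>\<^bsub>?G\<^esub>" using G.pow_ord_eq_1[OF g] ordg by simp
  have z1: "z \<noteq> \<one>\<^bsub>?G\<^esub>"
  proof
    assume "z = \<one>\<^bsub>?G\<^esub>"
    hence "n dvd m" using G.pow_eq_id[OF g, of m] ordg z_def by simp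
    thus False using nm by (simp add: nat_dvd_not_less)
  qed
  have zz: "z \<otimes>\<^bsub>?G\<^esub> z = \<one>\<^bsub>?G\<^esub>"
    unfolding z_def using G.nat_pow_mult[OF g, of m m] gn nm by (simp add: mult_2)
  obtain za zb zc zd where Zabcd: "Z = (za,zb,zc,zd)" by (cases Z rule: prod_cases4)
  have I1: "pr (1,0,0,1) = \<one>\<^bsub>?G\<^esub>" by (simp add: PSL2_one)
  have ZnI: "(za,zb,zc,zd) \<noteq> (1,0,0,1)" "(za,zb,zc,zd) \<noteq> (-1,0,0,-1)"
  proof -
    show "(za,zb,zc,zd) \<noteq> (1,0,0,1)" using z1 zZ Zabcd I1 by auto
    have "pr ((-1,0,0,-1)::'a mat22) = pr (1,0,0,1)" using pr_mneg[of "(1,0,0,1)::'a mat22"] by simp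
    then show "(za,zb,zc,zd) \<noteq> (-1,0,0,-1)" using z1 zZ Zabcd I1 by auto
  qed
  have "pr (mmul Z Z) = pr (1,0,0,1)" using zz zZ pr_mult[OF Zc Zc] I1 by simp
  hence "(1,0,0,1) = mmul Z Z \<or> (1,0,0,1) = mneg (mmul Z Z)" by (simp only: pr_eq_iff)
  hence "mmul Z Z = (1,0,0,1) \<or> mmul Z Z = mneg (1,0,0,1)" by (metis mneg_mneg)
  moreover have "mneg ((1,0,0,1)::'a mat22) = (-1,0,0,-1)" by simp
  ultimately have ZZ: "mmul (za,zb,zc,zd) (za,zb,zc,zd) = (1,0,0,1) \<or> mmul (za,zb,zc,zd) (za,zb,zc,zd) = (-1,0,0,-1)"
    unfolding Zabcd by metis
  have "zd = -za \<and> za*za + zb*zc = -1"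
    by (rule inv_shape[OF two ns _ ZnI ZZ]) (use Zc Zabcd in simp)
  hence dA: "zd = -za" and eZ: "za*za + zb*zc = -1" by auto
  have Zdef: "Z = (za,zb,zc,-za)" using Zabcd dA by simp
  have b0: "zb \<noteq> 0" and c0: "zc \<noteq> 0"
    using eZ ns by (auto simp: power2_eq_square)
  define Cc where "Cc = {p::'a\<times>'a. fst p^2 + snd p^2 = 1}"
  define P where "P = (\<lambda>p. pr (tm za zb zc p)) ` Cc"
  have commP: "pr B \<in> P" if "mdet B = 1" "mmul B Z = mmul Z B" for B
  proof -
    obtain x y u w where B: "B = (x,y,u,w)" by (cases B rule: prod_cases4)
    have Bt: "B = tm za zb zc (x - u/zc*za, u/zc)"
      using comm_tm[OF eZ c0, of x y u w] that B Zdef by simp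
    have "(x - u/zc*za)^2 + (u/zc)^2 = 1" using tm_det[OF eZ, of "x - u/zc*za" "u/zc"] that Bt by simp
    hence "(x - u/zc*za, u/zc) \<in> Cc" by (simp add: Cc_def)
    thus ?thesis unfolding P_def using Bt by blast
  qed
  have UP: "U \<subseteq> P"
  proof
    fix u assume "u \<in> U"
    then obtain k :: nat where uk: "u = g [^]\<^bsub>?G\<^esub> k" unfolding Upow by blast
    have Ak: "mdet (A [^]\<^bsub>SL2\<^esub> k) = 1" using S.nat_pow_closed[of A k] A by simp
    have "mmul (A [^]\<^bsub>SL2\<^esub> k) Z = mmul Z (A [^]\<^bsub>SL2\<^esub> k)"
      unfolding Z_def using S.nat_pow_comm[of A k m] A by simp
    hence "pr (A [^]\<^bsub>SL2\<^esub> k) \<in> P" using commP Ak by blast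
    thus "u \<in> P" using uk gA pr_pow[OF A] by simp
  qed
  have finCc: "finite Cc" by (rule finite_subset[OF subset_UNIV]) simp
  have finP: "finite P" unfolding P_def using finCc by simp
  have cardCc: "card Cc \<le> card (UNIV::'a set) + 1" unfolding Cc_def by (rule circle_card[OF ns])
  define r where "r = (\<lambda>y. SOME p. p \<in> Cc \<and> pr (tm za zb zc p) = y)"
  have r: "r y \<in> Cc \<and> pr (tm za zb zc (r y)) = y" if "y \<in> P" for y
  proof -
    from that obtain p where "p \<in> Cc" "pr (tm za zb zc p) = y" unfolding P_def by blast
    hence "p \<in> Cc \<and> pr (tm za zb zc p) = y" by blast
    thus ?thesis unfolding r_def by (rule someI)
  qed
  define ng where "ng = (\<lambda>p::'a\<times>'a. (- fst p, - snd p))"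
  have ngC: "ng p \<in> Cc" if "p \<in> Cc" for p using that by (simp add: ng_def Cc_def)
  have prng: "pr (tm za zb zc (ng p)) = pr (tm za zb zc p)" for p
    by (cases p) (simp add: ng_def tm_neg)
  have injr: "inj_on r P" by (rule inj_on_inverseI[where g="\<lambda>p. pr (tm za zb zc p)"]) (use r in blast)
  have injnr: "inj_on (ng \<circ> r) P"
    by (rule inj_on_inverseI[where g="\<lambda>p. pr (tm za zb zc p)"]) (use r prng in auto)
  have disj: "r ` P \<inter> (ng \<circ> r) ` P = {}"
  proof (rule ccontr)
    assume "r ` P \<inter> (ng \<circ> r) ` P \<noteq> {}"
    then obtain y y' where y: "y \<in> P" "y' \<in> P" and e: "r y = ng (r y')"
      by (auto simp del: prod.collapse) (metis)
    have "y = y'" using r[OF y(1)] r[OF y(2)] e prng by metis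
    with e have "r y = ng (r y)" by simp
    hence "fst (r y) = 0 \<and> snd (r y) = 0" using neg_self_zero[OF two]
      by (metis fst_conv ng_def snd_conv)
    with r[OF y(1)] show False by (simp add: Cc_def)
  qed
  have c1: "card (r ` P) = card P" by (rule card_image[OF injr])
  have c2: "card ((ng \<circ> r) ` P) = card P" by (rule card_image[OF injnr])
  have "card (r ` P \<union> (ng \<circ> r) ` P) = card (r ` P) + card ((ng \<circ> r) ` P)"
    by (rule card_Un_disjoint) (use finP disj in auto)
  hence "card (r ` P \<union> (ng \<circ> r) ` P) = card P + card P" using c1 c2 by simp
  moreover have "card (r ` P \<union> (ng \<circ> r) ` P) \<le> card Cc"
  proof (rule card_mono[OF finCc])
    have "r ` P \<subseteq> Cc" by (rule image_subsetI) (use r in blast)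
    moreover have "(ng \<circ> r) ` P \<subseteq> Cc"
      by (rule image_subsetI) (use r ngC in simp)
    ultimately show "r ` P \<union> (ng \<circ> r) ` P \<subseteq> Cc" by blast
  qed
  ultimately have "2 * card P \<le> card (UNIV::'a set) + 1" using cardCc by simp
  hence "card P \<le> n" unfolding n_def using cardU by simp
  moreover have "card U \<le> card P" by (rule card_mono[OF finP UP])
  ultimately have "card U = card P" unfolding n_def by simp
  hence UeqP: "U = P" by (rule card_subset_eq[OF finP UP])
  have subV: "subgroup V ?G" unfolding Vdef by (rule G.normalizer_imp_subgroup[OF Usub])
  have memV: "h \<in> V \<longleftrightarrow> h \<in> carrier ?G \<and> h <#\<^bsub>?G\<^esub> U #>\<^bsub>?G\<^esub> inv\<^bsub>?G\<^esub> h = U" for h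
    unfolding Vdef by (rule normV[OF Usub])
  have zc: "z \<in> carrier ?G" using zU Usub by blast
  have uniq: "y = z" if y: "y \<in> U" "y \<otimes>\<^bsub>?G\<^esub> y = \<one>\<^bsub>?G\<^esub>" "y \<noteq> \<one>\<^bsub>?G\<^esub>" for y
  proof -
    obtain k :: nat where yk: "y = g [^]\<^bsub>?G\<^esub> k" using y(1) unfolding Upow by blast
    have "g [^]\<^bsub>?G\<^esub> (k + k) = \<one>\<^bsub>?G\<^esub>" using y(2) yk G.nat_pow_mult[OF g, of k k] by simp
    hence "n dvd k + k" using G.pow_eq_id[OF g] ordg by simp
    hence "2*m dvd 2*k" using nm by (simp add: mult_2)
    hence "m dvd k" by simp
    then obtain j where kj: "k = m*j" by blast
    have gnt: "g [^]\<^bsub>?G\<^esub> (n*t) = \<one>\<^bsub>?G\<^esub>" for t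
      using G.nat_pow_pow[OF g, of n t] gn by simp
    show ?thesis
    proof (cases "even j")
      case True
      then have "k = n*(j div 2)" using kj nm by auto
      then have "y = \<one>\<^bsub>?G\<^esub>" using yk gnt by simp
      with y(3) show ?thesis by simp
    next
      case False
      then have "k = m + n*(j div 2)" using kj nm
      proof -
        obtain i where "j = 2*i + 1" using False oddE by blast
        thus ?thesis using kj nm by (simp add: algebra_simps)
      qed
      then have "y = z \<otimes>\<^bsub>?G\<^esub> g [^]\<^bsub>?G\<^esub> (n*(j div 2))"
        using yk G.nat_pow_mult[OF g] z_def by simp
      then show ?thesis using gnt zc by simp
    qed
  qed
  have conjz: "h \<otimes>\<^bsub>?G\<^esub> z \<otimes>\<^bsub>?G\<^esub> inv\<^bsub>?G\<^esub> h = z" if hV: "h \<in> V" for h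
  proof -
    have h: "h \<in> carrier ?G" and hU: "h <#\<^bsub>?G\<^esub> U #>\<^bsub>?G\<^esub> inv\<^bsub>?G\<^esub> h = U"
      using hV memV by auto
    define y where "y = h \<otimes>\<^bsub>?G\<^esub> z \<otimes>\<^bsub>?G\<^esub> inv\<^bsub>?G\<^esub> h"
    have "y \<in> h <#\<^bsub>?G\<^esub> U #>\<^bsub>?G\<^esub> inv\<^bsub>?G\<^esub> h"
      unfolding y_def l_coset_def r_coset_def using zU by blast
    hence yU: "y \<in> U" using hU by simp
    have "y \<otimes>\<^bsub>?G\<^esub> y = h \<otimes>\<^bsub>?G\<^esub> (z \<otimes>\<^bsub>?G\<^esub> (inv\<^bsub>?G\<^esub> h \<otimes>\<^bsub>?G\<^esub> (h \<otimes>\<^bsub>?G\<^esub> (z \<otimes>\<^bsub>?G\<^esub> inv\<^bsub>?G\<^esub> h))))"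
      unfolding y_def using h zc by (simp add: G.m_assoc)
    also have "\<dots> = h \<otimes>\<^bsub>?G\<^esub> ((z \<otimes>\<^bsub>?G\<^esub> z) \<otimes>\<^bsub>?G\<^esub> inv\<^bsub>?G\<^esub> h)"
      using h zc by (simp add: G.inv_cancel_l2 G.m_assoc)
    also have "\<dots> = \<one>\<^bsub>?G\<^esub>" using zz h by simp
    finally have yy: "y \<otimes>\<^bsub>?G\<^esub> y = \<one>\<^bsub>?G\<^esub>" .
    have "y \<noteq> \<one>\<^bsub>?G\<^esub>"
    proof
      assume "y = \<one>\<^bsub>?G\<^esub>"
      hence "inv\<^bsub>?G\<^esub> h \<otimes>\<^bsub>?G\<^esub> y \<otimes>\<^bsub>?G\<^esub> h = \<one>\<^bsub>?G\<^esub>" using h by simp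
      moreover have "inv\<^bsub>?G\<^esub> h \<otimes>\<^bsub>?G\<^esub> y \<otimes>\<^bsub>?G\<^esub> h = z"
        unfolding y_def using h zc by (simp add: G.m_assoc G.inv_cancel_l2)
      ultimately show False using z1 by simp
    qed
    thus ?thesis using uniq yU yy y_def by blast
  qed
  have commB: "mmul B Z = mmul Z B \<or> mmul B Z = mneg (mmul Z B)" if B: "mdet B = 1" "pr B \<in> V" for B
  proof -
    define M where "M = mmul (mmul B Z) (madj B)"
    have "pr B \<otimes>\<^bsub>?G\<^esub> z \<otimes>\<^bsub>?G\<^esub> inv\<^bsub>?G\<^esub> (pr B) = pr M"
      unfolding M_def zZ using B(1) Zc by (simp add: pr_inv pr_mult mdet_mmul)
    hence "pr M = pr Z" using conjz[OF B(2)] zZ by simp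
    hence ZM: "Z = M \<or> Z = mneg M" by (simp add: pr_eq_iff)
    have MB: "mmul M B = mmul B Z" unfolding M_def
      using B(1) by (simp add: mmul_assoc madj_left)
    from ZM show ?thesis
    proof
      assume "Z = M" thus ?thesis using MB by simp
    next
      assume "Z = mneg M"
      hence "mmul Z B = mneg (mmul B Z)" using MB by (simp add: mneg_mmul_left)
      thus ?thesis by simp
    qed
  qed
  have Vsub: "V \<subseteq> carrier ?G" using subV subgroup.subset by blast
  have inter: "intersecting ?G U V"
    unfolding intersecting_def
  proof (intro conjI ballI)
    show "V \<subseteq> carrier ?G" by (rule Vsub)
    fix g1 g2 assume g1: "g1 \<in> V" and g2: "g2 \<in> V"
    define h where "h = inv\<^bsub>?G\<^esub> g2 \<otimes>\<^bsub>?G\<^esub> g1"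
    have hV: "h \<in> V" unfolding h_def using g1 g2 subV by (simp add: subgroup.m_closed subgroup.m_inv_closed)
    then obtain B where B: "mdet B = 1" "h = pr B" using Vsub by (auto simp: PSL2_carrier)
    have hc: "h \<in> carrier ?G" using hV Vsub by blast
    have main: "\<exists>x\<in>carrier ?G. inv\<^bsub>?G\<^esub> x \<otimes>\<^bsub>?G\<^esub> h \<otimes>\<^bsub>?G\<^esub> x \<in> U"
    proof (cases "mmul B Z = mmul Z B")
      case True
      hence "h \<in> U" using commP[OF B(1)] B(2) UeqP by simp
      thus ?thesis using hc by (intro bexI[where x="\<one>\<^bsub>?G\<^esub>"]) simp_all
    next
      case False
      have "pr B \<in> V" using B hV by simp
      hence anti: "mmul B Z = mneg (mmul Z B)" using commB[OF B(1)] False by blast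
      obtain x y u w where Bx: "B = (x,y,u,w)" by (cases B rule: prod_cases4)
      have cm: "mmul (x,y,u,w) (za,zb,zc,-za) = mneg (mmul (za,zb,zc,-za) (x,y,u,w))"
        using anti Bx Zdef by simp
      have w: "w = -x" by (rule anticomm_trace[OF b0 two cm])
      have "x*(-x) - y*u = 1" using B(1) Bx w by simp
      moreover have "x*x + y*u = -(x*(-x) - y*u)" by (simp add: algebra_simps)
      ultimately have eB: "x*x + y*u = -1" by simp
      have u0: "u \<noteq> 0" using eB ns by (auto simp: power2_eq_square)
      obtain s t where st0: "s^2 + t^2 = 1/(zc*u)" using sum_two_squares[OF oddq] by blast
      have st: "zc*u*(s*s + t*t) = 1" using st0 c0 u0 by (simp add: power2_eq_square)
      define XX where "XX = (zc*s + zc*x*t, x*s - t - za*s - za*x*t, zc*u*t, u*s - u*za*t)"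
      have XX: "mdet XX = 1" "mmul XX Z = mmul B XX"
        using conj_exists[OF eZ eB st] unfolding XX_def Bx w Zdef by simp_all
      have "inv\<^bsub>?G\<^esub> (pr XX) \<otimes>\<^bsub>?G\<^esub> h \<otimes>\<^bsub>?G\<^esub> pr XX = pr (mmul (mmul (madj XX) B) XX)"
        using XX(1) B by (simp add: pr_inv pr_mult mdet_mmul)
      also have "mmul (mmul (madj XX) B) XX = Z"
      proof -
        have "mmul (mmul (madj XX) B) XX = mmul (madj XX) (mmul XX Z)"
          using XX(2) by (simp only: mmul_assoc)
        also have "\<dots> = mmul (mmul (madj XX) XX) Z" by (simp only: mmul_assoc)
        also have "\<dots> = Z" using XX(1) by (simp add: madj_left)
        finally show ?thesis .
      qed
      finally have "inv\<^bsub>?G\<^esub> (pr XX) \<otimes>\<^bsub>?G\<^esub> h \<otimes>\<^bsub>?G\<^esub> pr XX \<in> U" using zU zZ by simp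
      thus ?thesis using pr_in_carrier[OF XX(1)] by blast
    qed
    thus "\<exists>x\<in>carrier ?G. inv\<^bsub>?G\<^esub> x \<otimes>\<^bsub>?G\<^esub> (inv\<^bsub>?G\<^esub> g2 \<otimes>\<^bsub>?G\<^esub> g1) \<otimes>\<^bsub>?G\<^esub> x \<in> U"
      unfolding h_def .
  qed
  obtain s t where st0: "s^2 + t^2 = -1/(zc*zc)" using sum_two_squares[OF oddq] by blast
  have st: "zc*zc*(s*s + t*t) = -1" using st0 c0 by (simp add: power2_eq_square field_simps)
  define x0 where "x0 = zc*s + zc*za*t"
  define W where "W = (x0, t - 2*za*s - za*za*t, zc*zc*t, -x0)"
  have Weq: "(zc*s + zc*za*t, t - 2*za*s - za*za*t, zc*zc*t, -(zc*za*t) - zc*s) = W"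
    by (simp add: W_def x0_def algebra_simps)
  have Wd: "mdet W = 1" and anti: "mmul W Z = mneg (mmul Z W)"
    using W_exists[OF eZ st] unfolding Weq Zdef[symmetric] by simp_all
  have WW: "mmul W W = (-1,0,0,-1)" unfolding W_def by (rule trace0_sq) (use Wd W_def in simp)
  define w where "w = pr W"
  have wc: "w \<in> carrier ?G" unfolding w_def by (rule pr_in_carrier[OF Wd])
  have "pr ((-1,0,0,-1)::'a mat22) = pr (1,0,0,1)" using pr_mneg[of "(1,0,0,1)::'a mat22"] by simp
  hence ww: "w \<otimes>\<^bsub>?G\<^esub> w = \<one>\<^bsub>?G\<^esub>" unfolding w_def using pr_mult[OF Wd Wd] WW I1 by simp
  have invw: "inv\<^bsub>?G\<^esub> w = w" by (rule G.inv_equality[OF ww wc wc])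
  have wuw: "w \<otimes>\<^bsub>?G\<^esub> u \<otimes>\<^bsub>?G\<^esub> w \<in> U" if u: "u \<in> U" for u
  proof -
    from u UeqP obtain p where p: "p \<in> Cc" "u = pr (tm za zb zc p)" unfolding P_def by blast
    obtain al be where pe: "p = (al, be)" by (cases p)
    define M where "M = tm za zb zc p"
    have Md: "mdet M = 1" using p(1) tm_det[OF eZ, of al be] unfolding M_def pe Cc_def by simp
    have Mc: "mmul M Z = mmul Z M" unfolding M_def Zdef by (rule tm_comm)
    have c: "mmul (mmul (mmul W M) W) Z = mmul Z (mmul (mmul W M) W)"
      by (rule anticomm_conj[OF anti Mc])
    have d: "mdet (mmul (mmul W M) W) = 1" using Wd Md by (simp add: mdet_mmul)
    have "w \<otimes>\<^bsub>?G\<^esub> u \<otimes>\<^bsub>?G\<^esub> w = pr (mmul (mmul W M) W)"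
      unfolding w_def p(2) M_def[symmetric] using Wd Md by (simp add: pr_mult mdet_mmul)
    thus ?thesis using commP[OF d c] UeqP by simp
  qed
  have wV: "w \<in> V"
  proof -
    have "w <#\<^bsub>?G\<^esub> U #>\<^bsub>?G\<^esub> w = U"
    proof
      show "w <#\<^bsub>?G\<^esub> U #>\<^bsub>?G\<^esub> w \<subseteq> U"
        unfolding l_coset_def r_coset_def using wuw by auto
      show "U \<subseteq> w <#\<^bsub>?G\<^esub> U #>\<^bsub>?G\<^esub> w"
      proof
        fix v assume v: "v \<in> U"
        have vc: "v \<in> carrier ?G" using v Usub by blast
        have "v = w \<otimes>\<^bsub>?G\<^esub> (w \<otimes>\<^bsub>?G\<^esub> v \<otimes>\<^bsub>?G\<^esub> w) \<otimes>\<^bsub>?G\<^esub> w"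
        proof -
          have "w \<otimes>\<^bsub>?G\<^esub> (w \<otimes>\<^bsub>?G\<^esub> v \<otimes>\<^bsub>?G\<^esub> w) \<otimes>\<^bsub>?G\<^esub> w
              = (w \<otimes>\<^bsub>?G\<^esub> w) \<otimes>\<^bsub>?G\<^esub> v \<otimes>\<^bsub>?G\<^esub> (w \<otimes>\<^bsub>?G\<^esub> w)"
            using wc vc by (simp add: G.m_assoc)
          thus ?thesis using ww vc by simp
        qed
        moreover have "w \<otimes>\<^bsub>?G\<^esub> v \<otimes>\<^bsub>?G\<^esub> w \<in> U" by (rule wuw[OF v])
        ultimately show "v \<in> w <#\<^bsub>?G\<^esub> U #>\<^bsub>?G\<^esub> w"
          unfolding l_coset_def r_coset_def by blast
      qed
    qed
    thus ?thesis using memV wc invw by simp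
  qed
  have wnU: "w \<notin> U"
  proof
    assume "w \<in> U"
    then obtain p where p: "w = pr (tm za zb zc p)" using UeqP unfolding P_def by blast
    hence "tm za zb zc p = W \<or> tm za zb zc p = mneg W" unfolding w_def by (simp add: pr_eq_iff)
    hence "W = tm za zb zc p \<or> W = mneg (tm za zb zc p)" by (metis mneg_mneg)
    hence "mmul W Z = mmul Z W"
      using tm_comm[of za zb zc p] unfolding Zdef[symmetric]
      by (auto simp: mneg_mmul_left mneg_mmul_right)
    hence "mneg (mmul Z W) = mmul Z W" using anti by simp
    hence "mdet (mmul Z W) = 0" by (rule mneg_self[OF two])
    thus False using Zc Wd by (simp add: mdet_mmul)
  qed
  have UV: "U \<subseteq> V"
  proof
    fix x assume xH: "x \<in> U"
    have xG: "x \<in> carrier ?G" using xH Usub by blast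
    have x1: "x \<in> \<one>\<^bsub>?G\<^esub> <#\<^bsub>?G\<^esub> U" using G.lcos_mult_one[OF Usub] xH by simp
    have "\<one>\<^bsub>?G\<^esub> <#\<^bsub>?G\<^esub> U = x <#\<^bsub>?G\<^esub> U"
      by (rule G.l_repr_independence[OF x1 G.one_closed subU])
    hence "x <#\<^bsub>?G\<^esub> U = U" using G.lcos_mult_one[OF Usub] by simp
    moreover have "U #>\<^bsub>?G\<^esub> inv\<^bsub>?G\<^esub> x = U"
      by (simp add: xH subU G.is_group subgroup.rcos_const subgroup.m_inv_closed)
    ultimately show "x \<in> V" using memV xG by simp
  qed
  define wU where "wU = (\<lambda>u. w \<otimes>\<^bsub>?G\<^esub> u) ` U"
  have wUV: "wU \<subseteq> V" unfolding wU_def using UV wV subgroup.m_closed[OF subV] by blast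
  have disj2: "U \<inter> wU = {}"
  proof (rule ccontr)
    assume "U \<inter> wU \<noteq> {}"
    then obtain u where u: "u \<in> U" "w \<otimes>\<^bsub>?G\<^esub> u \<in> U" unfolding wU_def by blast
    have uc: "u \<in> carrier ?G" using u Usub by blast
    have "w = (w \<otimes>\<^bsub>?G\<^esub> u) \<otimes>\<^bsub>?G\<^esub> inv\<^bsub>?G\<^esub> u"
      using wc uc by (simp add: G.m_assoc)
    moreover have "(w \<otimes>\<^bsub>?G\<^esub> u) \<otimes>\<^bsub>?G\<^esub> inv\<^bsub>?G\<^esub> u \<in> U"
      using u subU by (simp add: subgroup.m_closed subgroup.m_inv_closed)
    ultimately show False using wnU by simp
  qed
  have cwU: "card wU = card U" unfolding wU_def
  proof (rule card_image)
    show "inj_on (\<lambda>u. w \<otimes>\<^bsub>?G\<^esub> u) U"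
    proof (rule inj_onI)
      fix x y assume "x \<in> U" "y \<in> U" "w \<otimes>\<^bsub>?G\<^esub> x = w \<otimes>\<^bsub>?G\<^esub> y"
      thus "x = y" using wc Usub G.l_cancel[of w x y] by blast
    qed
  qed
  have finV: "finite V" using finite_subset[OF Vsub finG] .
  have "card (U \<union> wU) = card U + card wU"
    by (rule card_Un_disjoint) (use finU wU_def disj2 in auto)
  moreover have "card (U \<union> wU) \<le> card V" by (rule card_mono[OF finV]) (use UV wUV in auto)
  ultimately have cV: "2 * n \<le> card V" using cwU n_def by simp
  define S where "S = {real (card F) / real (card U) | F. intersecting ?G U F}"
  have finS: "finite S"
  proof -
    have "S = (\<lambda>F. real (card F) / real (card U)) ` {F. intersecting ?G U F}"
      unfolding S_def by blast
    moreover have "finite {F. intersecting ?G U F}" by (rule finite_subset[OF subset_UNIV]) simp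
    ultimately show ?thesis by simp
  qed
  have "real (card V) / real (card U) \<in> S" unfolding S_def using inter by blast
  hence "real (card V) / real (card U) \<le> rho ?G U" unfolding rho_def S_def[symmetric]
    by (rule Max_ge[OF finS])
  moreover have "2 \<le> real (card V) / real (card U)"
  proof -
    have "n > 0" using nm by simp
    moreover have "2 * real n \<le> real (card V)" using cV by linarith
    ultimately show ?thesis unfolding n_def by (simp add: field_simps)
  qed
  ultimately show ?thesis using inter by linarith
qed

end
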